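(* Let $G$ be any strategic game with players $1,\dots,n$. For every belief model $(\Omega,\bar s_1,\dots,\bar s_n,P_1,\dots,P_n)$ for $G$, $$[\![\mathit{rat}_{gbr}]\!]\cap[\![\Box^*\mathit{rat}_{gbr}]\!]\subseteq[\![\nu X.\,O_{lsd}X]\!].$$
   Context: Strategic game $G=(T_1,\dots,T_n,<_1,\dots,<_n)$: arbitrary nonempty $T_i$, $<_i$ total linear order on $T=\prod_iT_i$, $\ge_i$ reflexive closure. Restriction: $S=(S_1,\dots,S_n)$, $S_i\subseteq T_i$. $\mathcal{L}_O$ and optimality models: first-order formulas over atoms $C(a)$, $a\ge^i_cb$ and constant $o$; in $(G,G',s)$ with assignment $\alpha$ ($o\mapsto s$): $C(x)$ iff $\alpha(x)_j\in G'_j$ for all $j$; $x\ge^i_zy$ iff $(\alpha(x)_i,\alpha(z)_{-i})\ge_i(\alpha(y)_i,\alpha(z)_{-i})$. $gbr_i:=\exists z(C(z)\wedge\forall y\;o\ge^i_zy)$; $lsd_i:=\forall y(C(y)\to\exists z(C(z)\wedge o\ge^i_zy))$. Belief model: $\Omega\ne\emptyset$, $\bar s_i:\Omega\to T_i$, $P_i:\Omega\to2^\Omega$, $\bar s(\omega)=(\bar s_i(\omega))_i$, $(G_E)_i=\{\bar s_i(u):u\in E\}$. Semantics: $[\![\mathit{rat}_{\phi_i}]\!]_E=\{\omega:(G,G_{P_i(\omega)},\bar s(\omega))\models\phi_i\}$, $[\![X]\!]_E=E$, $\wedge,\neg$ as intersection/complement, $[\![\Box_i\psi]\!]_E=\{\omega:P_i(\omega)\subseteq[\![\psi]\!]_E\}$,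 $[\![O_{\phi_i}\psi]\!]_E=\{\omega:(G,G_{[\![\psi]\!]_E},\bar s(\omega))\models\phi_i\}$, $[\![\nu X.\psi]\!]_E$ = outcome of the transfinite iteration of $F\mapsto[\![\psi]\!]_F\cap F$ starting from $\Omega$ (successor: apply the operator; limit: intersect; stop at the first repetition). $\mathit{rat}_\phi=\bigwedge_i\mathit{rat}_{\phi_i}$, $\Box\psi=\bigwedge_i\Box_i\psi$, $O_\phi\psi=\bigwedge_iO_{\phi_i}\psi$, $\Box^*\psi:=\nu X.\Box(X\wedge\psi)$. *)

theory Defs
  imports Main "HOL-Library.FuncSet"
begin

text \<open>Players are 0,...,n-1 (the paper's 1,...,n).  All strategies live in one type 'a;
 player i's strategy set is T i.  A strategy profile is an extensional function
 s :: nat => 'a with s j : T j for j < n, i.e. an element of PiE {..<n} T.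
 ge i a b means a >=_i b (reflexive closure of player i's strict total order on T).\<close>

definition profiles :: "nat \<Rightarrow> (nat \<Rightarrow> 'a set) \<Rightarrow> (nat \<Rightarrow> 'a) set" where
  "profiles n T = PiE {..<n} T"

definition strategic_game ::
  "nat \<Rightarrow> (nat \<Rightarrow> 'a set) \<Rightarrow> (nat \<Rightarrow> (nat \<Rightarrow> 'a) \<Rightarrow> (nat \<Rightarrow> 'a) \<Rightarrow> bool) \<Rightarrow> bool" where
  "strategic_game n T ge \<longleftrightarrow>
     (\<forall>i<n. T i \<noteq> {}) \<and>
     (\<forall>i<n.
        (\<forall>a\<in>profiles n T. ge i a a) \<and>
        (\<forall>a\<in>profiles n T. \<forall>b\<in>profiles n T. ge i a b \<and> ge i b a \<longrightarrow> a = b) \<and>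
        (\<forall>a\<in>profiles n T. \<forall>b\<in>profiles n T. \<forall>c\<in>profiles n T.
            ge i a b \<and> ge i b c \<longrightarrow> ge i a c) \<and>
        (\<forall>a\<in>profiles n T. \<forall>b\<in>profiles n T. ge i a b \<or> ge i b a))"

definition inC :: "nat \<Rightarrow> (nat \<Rightarrow> 'a set) \<Rightarrow> (nat \<Rightarrow> 'a) \<Rightarrow> bool" where
  "inC n S z \<longleftrightarrow> (\<forall>j<n. z j \<in> S j)"

text \<open>Optimality notions, evaluated in the optimality model (G, S, s) with o |-> s.
 Quantified variables range over the profiles T of G.
 x >=^i_z y is ge i (z(i := x i)) (z(i := y i)).\<close>

definition gbr :: "nat \<Rightarrow> (nat \<Rightarrow> 'a set) \<Rightarrow> (nat \<Rightarrow> (nat \<Rightarrow> 'a) \<Rightarrow> (nat \<Rightarrow> 'a) \<Rightarrow> bool)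
    \<Rightarrow> nat \<Rightarrow> (nat \<Rightarrow> 'a set) \<Rightarrow> (nat \<Rightarrow> 'a) \<Rightarrow> bool" where
  "gbr n T ge i S s \<longleftrightarrow>
     (\<exists>z\<in>profiles n T. inC n S z \<and>
        (\<forall>y\<in>profiles n T. ge i (z(i := s i)) (z(i := y i))))"

definition lsd :: "nat \<Rightarrow> (nat \<Rightarrow> 'a set) \<Rightarrow> (nat \<Rightarrow> (nat \<Rightarrow> 'a) \<Rightarrow> (nat \<Rightarrow> 'a) \<Rightarrow> bool)
    \<Rightarrow> nat \<Rightarrow> (nat \<Rightarrow> 'a set) \<Rightarrow> (nat \<Rightarrow> 'a) \<Rightarrow> bool" where
  "lsd n T ge i S s \<longleftrightarrow>
     (\<forall>y\<in>profiles n T. inC n S y \<longrightarrow>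
        (\<exists>z\<in>profiles n T. inC n S z \<and> ge i (z(i := s i)) (z(i := y i))))"

definition belief_model :: "nat \<Rightarrow> (nat \<Rightarrow> 'a set) \<Rightarrow> 'w set \<Rightarrow> (nat \<Rightarrow> 'w \<Rightarrow> 'a)
    \<Rightarrow> (nat \<Rightarrow> 'w \<Rightarrow> 'w set) \<Rightarrow> bool" where
  "belief_model n T Om sb P \<longleftrightarrow> Om \<noteq> {} \<and>
     (\<forall>i<n. \<forall>w\<in>Om. sb i w \<in> T i \<and> P i w \<subseteq> Om)"

definition sbar :: "nat \<Rightarrow> (nat \<Rightarrow> 'w \<Rightarrow> 'a) \<Rightarrow> 'w \<Rightarrow> (nat \<Rightarrow> 'a)" where
  "sbar n sb w = (\<lambda>j. if j < n then sb j w else undefined)"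

definition GE :: "(nat \<Rightarrow> 'w \<Rightarrow> 'a) \<Rightarrow> 'w set \<Rightarrow> nat \<Rightarrow> 'a set" where
  "GE sb E = (\<lambda>j. sb j ` E)"

text \<open>Shallow embedding of the belief language: a formula denotes a map E |-> [[psi]]_E
 (E is the interpretation of the variable X); all sets are subsets of Omega.
 An optimality notion opt is a predicate opt i S s, e.g. gbr n T ge.\<close>

type_synonym 'w fsem = "'w set \<Rightarrow> 'w set"

definition ratI :: "'w set \<Rightarrow> nat \<Rightarrow> (nat \<Rightarrow> 'w \<Rightarrow> 'a) \<Rightarrow> (nat \<Rightarrow> 'w \<Rightarrow> 'w set)
    \<Rightarrow> (nat \<Rightarrow> (nat \<Rightarrow> 'a set) \<Rightarrow> (nat \<Rightarrow> 'a) \<Rightarrow> bool) \<Rightarrow> nat \<Rightarrow> 'w fsem" where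
  "ratI Om n sb P opt i = (\<lambda>E. {w\<in>Om. opt i (GE sb (P i w)) (sbar n sb w)})"

definition varX :: "'w fsem" where
  "varX = (\<lambda>E. E)"

definition conjF :: "'w fsem \<Rightarrow> 'w fsem \<Rightarrow> 'w fsem" where
  "conjF a b = (\<lambda>E. a E \<inter> b E)"

text \<open>Conjunction over all players i < n (empty conjunction = Omega).\<close>
definition bigconj :: "'w set \<Rightarrow> nat \<Rightarrow> (nat \<Rightarrow> 'w fsem) \<Rightarrow> 'w fsem" where
  "bigconj Om n f = (\<lambda>E. Om \<inter> (\<Inter>i\<in>{..<n}. f i E))"

definition boxI :: "'w set \<Rightarrow> (nat \<Rightarrow> 'w \<Rightarrow> 'w set) \<Rightarrow> nat \<Rightarrow> 'w fsem \<Rightarrow> 'w fsem" where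
  "boxI Om P i psi = (\<lambda>E. {w\<in>Om. P i w \<subseteq> psi E})"

definition OI :: "'w set \<Rightarrow> nat \<Rightarrow> (nat \<Rightarrow> 'w \<Rightarrow> 'a)
    \<Rightarrow> (nat \<Rightarrow> (nat \<Rightarrow> 'a set) \<Rightarrow> (nat \<Rightarrow> 'a) \<Rightarrow> bool) \<Rightarrow> nat \<Rightarrow> 'w fsem \<Rightarrow> 'w fsem" where
  "OI Om n sb opt i psi = (\<lambda>E. {w\<in>Om. opt i (GE sb (psi E)) (sbar n sb w)})"

text \<open>Stages of the transfinite iteration of F |-> h F \<inter> F from Om: the least family
 containing Om, closed under the operator, and closed under intersections of nonempty
 subfamilies (limit stages).\<close>
inductive_set defl_stages :: "'w set \<Rightarrow> ('w set \<Rightarrow> 'w set) \<Rightarrow> 'w set set"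
  for Om :: "'w set" and h :: "'w set \<Rightarrow> 'w set" where
  base: "Om \<in> defl_stages Om h"
| step: "F \<in> defl_stages Om h \<Longrightarrow> h F \<inter> F \<in> defl_stages Om h"
| lim:  "A \<noteq> {} \<Longrightarrow> (\<And>F. F \<in> A \<Longrightarrow> F \<in> defl_stages Om h) \<Longrightarrow> \<Inter>A \<in> defl_stages Om h"

text \<open>The outcome of the (decreasing) iteration is its last stage = intersection of all
 stages.  psi is the denotation E |-> [[psi]]_E with E the interpretation of X, so
 [[nu X. psi]]_E (independent of E, X being bound) is:\<close>
definition nuF :: "'w set \<Rightarrow> 'w fsem \<Rightarrow> 'w fsem" where
  "nuF Om psi = (\<lambda>E. \<Inter>(defl_stages Om psi))"

end

theory Submission
  imports Defs
begin

lemma nuF_post: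
  "\<Inter>(defl_stages Om h) \<subseteq> h (\<Inter>(defl_stages Om h))"
proof -
  let ?K = "\<Inter>(defl_stages Om h)"
  have "?K \<in> defl_stages Om h"
    by (rule defl_stages.lim) (auto intro: defl_stages.base)
  hence "h ?K \<inter> ?K \<in> defl_stages Om h" by (rule defl_stages.step)
  hence "?K \<subseteq> h ?K \<inter> ?K" by (rule Inter_lower)
  thus ?thesis by (rule subset_trans) (rule Int_lower1)
qed

theorem mainTheorem4:
  fixes n :: nat and T :: "nat \<Rightarrow> 'a set"
    and ge :: "nat \<Rightarrow> (nat \<Rightarrow> 'a) \<Rightarrow> (nat \<Rightarrow> 'a) \<Rightarrow> bool"
    and Om :: "'w set" and sb :: "nat \<Rightarrow> 'w \<Rightarrow> 'a" and P :: "nat \<Rightarrow> 'w \<Rightarrow> 'w set"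
    and E :: "'w set"
  assumes "strategic_game n T ge"
    and "belief_model n T Om sb P"
  shows "let rat_gbr = bigconj Om n (ratI Om n sb P (gbr n T ge));
             Box = (\<lambda>psi. bigconj Om n (\<lambda>i. boxI Om P i psi));
             O_lsd = (\<lambda>psi. bigconj Om n (\<lambda>i. OI Om n sb (lsd n T ge) i psi))
         in rat_gbr E \<inter> nuF Om (Box (conjF varX rat_gbr)) E
              \<subseteq> nuF Om (O_lsd varX) E"
proof -
  define R where "R = {w\<in>Om. \<forall>i<n. gbr n T ge i (GE sb (P i w)) (sbar n sb w)}"
  define h where "h = (\<lambda>F. {w\<in>Om. \<forall>i<n. P i w \<subseteq> F \<inter> R})"
  define g where "g = (\<lambda>F. {w\<in>Om. \<forall>i<n. lsd n T ge i (GE sb F) (sbar n sb w)})"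
  have eR: "bigconj Om n (ratI Om n sb P (gbr n T ge)) = (\<lambda>E'. R)"
    unfolding R_def bigconj_def ratI_def by auto
  have eh: "bigconj Om n (\<lambda>i. boxI Om P i (conjF varX (\<lambda>E'. R))) = h"
    unfolding h_def bigconj_def boxI_def conjF_def varX_def by (auto simp: fun_eq_iff)
  have eg: "bigconj Om n (\<lambda>i. OI Om n sb (lsd n T ge) i varX) = g"
    unfolding g_def bigconj_def OI_def varX_def by (auto simp: fun_eq_iff)
  define K where "K = \<Inter>(defl_stages Om h)"
  have Kh: "K \<subseteq> h K" unfolding K_def by (rule nuF_post)
  have RO: "R \<subseteq> Om" unfolding R_def by auto
  have main: "R \<inter> K \<subseteq> F" if "F \<in> defl_stages Om g" for F
    using that
  proof induction
    case base then show ?case using RO by auto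
  next
    case (step F)
    have "R \<inter> K \<subseteq> g F"
    proof
      fix w assume w: "w \<in> R \<inter> K"
      have wO: "w \<in> Om" using w RO by auto
      have wh: "w \<in> h K" using w Kh by auto
      have Pw: "P i w \<subseteq> F" if "i < n" for i
      proof -
        have "P i w \<subseteq> K \<inter> R" using wh that unfolding h_def by auto
        thus ?thesis using step.IH by auto
      qed
      have "lsd n T ge i (GE sb F) (sbar n sb w)" if i: "i < n" for i
      proof -
        have "gbr n T ge i (GE sb (P i w)) (sbar n sb w)" using w i unfolding R_def by auto
        then obtain z where z: "z \<in> profiles n T" "inC n (GE sb (P i w)) z"
          "\<forall>y\<in>profiles n T. ge i (z(i := sbar n sb w i)) (z(i := y i))"
          unfolding gbr_def by blast
        have "inC n (GE sb F) z" using z(2) Pw[OF i] unfolding inC_def GE_def by blast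
        thus ?thesis unfolding lsd_def using z by blast
      qed
      thus "w \<in> g F" unfolding g_def using wO by auto
    qed
    thus ?case using step.IH by auto
  next
    case (lim A) then show ?case by (simp add: le_Inf_iff)
  qed
  have "R \<inter> K \<subseteq> \<Inter>(defl_stages Om g)" using main by (simp add: le_Inf_iff)
  thus ?thesis unfolding Let_def nuF_def eR eh eg K_def .
qed

end
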